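(* If an online algorithm in the discrete-time model is $\alpha$-competitive for MaxProb (all-ties-win) when the true prior is $F_K$ and $\beta$-competitive when the true prior is $F_k$ for every $k\in[K-1]$, then there is a minor-oblivious algorithm with the same guarantees.
   Context: Discrete-time model: $n$ values $x_1,\dots,x_n$ i.i.d. from a true prior are revealed in the order $x_1,\dots,x_n$; an online algorithm irrevocably accepts at most one; $\mathrm{ALG}$ is the accepted index. MaxProb with all-ties-win: success iff the accepted value equals $\max_i x_i$; the competitive ratio is the success probability. $[K]=\{1,\dots,K\}$; $\tilde F$ is a distribution on $[K]$ with pmf $\tilde f$, $\tilde f(1)>0$; $F_k(\ell)=\tilde F(\ell)/\tilde F(k)$ for $\ell\le k$ and $F_k(\ell)=1$ for $\ell>k$. The conditional acceptance probability of an algorithm is $\mathrm{Acc}_t(\mathbf x_{1:t})=\Pr[\mathrm{ALG}=t\mid\mathrm{ALG}\ge t,(x_1,\dots,x_t)=\mathbf x_{1:t}]$. An algorithm is minor-oblivious if $\mathrm{Acc}_t(\mathbf x_{1:t})=\mathrm{Acc}_t(\mathbf y_{1:t})$ whenever $x_t=y_t=\max\mathbf x_{1:t}=\max\mathbf y_{1:t}$. *)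

theory Defs
  imports Complex_Main
begin

text \<open>An online algorithm is represented by its conditional acceptance
  probabilities: acc xs = Acc_t(x_{1:t}) where xs = [x_1,...,x_t] (t = length xs).\<close>

definition is_pmf_on :: "nat \<Rightarrow> (nat \<Rightarrow> real) \<Rightarrow> bool" where
  "is_pmf_on K f \<longleftrightarrow> (\<forall>l. 0 \<le> f l) \<and> (\<forall>l. l \<notin> {1..K} \<longrightarrow> f l = 0)
      \<and> (\<Sum>l=1..K. f l) = 1"

definition cdf :: "(nat \<Rightarrow> real) \<Rightarrow> nat \<Rightarrow> real" where
  "cdf f k = (\<Sum>l=1..k. f l)"

definition trunc_pmf :: "(nat \<Rightarrow> real) \<Rightarrow> nat \<Rightarrow> nat \<Rightarrow> real" where
  "trunc_pmf f k l = (if 1 \<le> l \<and> l \<le> k then f l / cdf f k else 0)"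

definition prefixes :: "nat \<Rightarrow> nat \<Rightarrow> nat list set" where
  "prefixes n K = {xs. xs \<noteq> [] \<and> length xs \<le> n \<and> set xs \<subseteq> {1..K}}"

definition valid_alg :: "nat \<Rightarrow> nat \<Rightarrow> (nat list \<Rightarrow> real) \<Rightarrow> bool" where
  "valid_alg n K acc \<longleftrightarrow> (\<forall>xs\<in>prefixes n K. 0 \<le> acc xs \<and> acc xs \<le> 1)"

definition minor_oblivious :: "nat \<Rightarrow> nat \<Rightarrow> (nat list \<Rightarrow> real) \<Rightarrow> bool" where
  "minor_oblivious n K acc \<longleftrightarrow>
     (\<forall>xs\<in>prefixes n K. \<forall>ys\<in>prefixes n K.
        length xs = length ys \<and> last xs = last ys \<and>
        last xs = Max (set xs) \<and> last ys = Max (set ys) \<longrightarrow> acc xs = acc ys)"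

text \<open>Probability that the algorithm accepts exactly at step t+1 (0-based index t),
  given the full input xs.\<close>
definition stop_prob :: "(nat list \<Rightarrow> real) \<Rightarrow> nat list \<Rightarrow> nat \<Rightarrow> real" where
  "stop_prob acc xs t = (\<Prod>s<t. 1 - acc (take (Suc s) xs)) * acc (take (Suc t) xs)"

definition success_prob :: "nat \<Rightarrow> nat \<Rightarrow> (nat \<Rightarrow> real) \<Rightarrow> (nat list \<Rightarrow> real) \<Rightarrow> real" where
  "success_prob n K p acc =
     (\<Sum>xs\<in>{xs. length xs = n \<and> set xs \<subseteq> {1..K}}.
        (\<Prod>i<n. p (xs ! i)) *
        (\<Sum>t<n. stop_prob acc xs t * (if xs ! t = Max (set xs) then 1 else 0)))"

end

theory Submission
  imports Defs
begin

definition LL :: "nat \<Rightarrow> nat set \<Rightarrow> nat list set" where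
  "LL r A = {xs. length xs = r \<and> set xs \<subseteq> A}"

definition RR :: "(nat list \<Rightarrow> real) \<Rightarrow> nat list \<Rightarrow> real" where
  "RR a zs = (\<Prod>s<length zs. 1 - a (take (Suc s) zs))"

definition WW :: "(nat \<Rightarrow> real) \<Rightarrow> (nat list \<Rightarrow> real) \<Rightarrow> nat \<Rightarrow> nat \<Rightarrow> real" where
  "WW p a t y = (\<Sum>zs\<in>LL t {1..y}. prod_list (map p zs) * p y * RR a zs * a (zs @ [y]))"

definition UU :: "(nat \<Rightarrow> real) \<Rightarrow> (nat list \<Rightarrow> real) \<Rightarrow> nat \<Rightarrow> nat \<Rightarrow> real" where
  "UU p a t m = (\<Sum>zs\<in>LL t {1..m}. prod_list (map p zs) * RR a zs)"

lemma finite_LL: "finite A \<Longrightarrow> finite (LL r A)"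
  using finite_lists_length_eq[of A r] unfolding LL_def by (simp add: conj_commute)

lemma LL_0: "LL 0 A = {[]}"
  by (auto simp: LL_def)

lemma sum_LL_append:
  assumes "finite A"
  shows "(\<Sum>xs\<in>LL (a+b) A. g xs) = (\<Sum>ys\<in>LL a A. \<Sum>ws\<in>LL b A. g (ys @ ws))"
proof -
  have img: "LL (a+b) A = (\<lambda>(ys,ws). ys @ ws) ` (LL a A \<times> LL b A)"
  proof
    show "LL (a+b) A \<subseteq> (\<lambda>(ys,ws). ys @ ws) ` (LL a A \<times> LL b A)"
    proof
      fix xs assume "xs \<in> LL (a+b) A"
      then have "(take a xs, drop a xs) \<in> LL a A \<times> LL b A"
        by (auto simp: LL_def dest: in_set_takeD in_set_dropD)
      then show "xs \<in> (\<lambda>(ys,ws). ys @ ws) ` (LL a A \<times> LL b A)"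
        by (metis (no_types, lifting) append_take_drop_id case_prod_conv image_eqI)
    qed
  qed (auto simp: LL_def)
  have inj: "inj_on (\<lambda>(ys,ws). ys @ ws) (LL a A \<times> LL b A)"
    by (auto simp: inj_on_def LL_def)
  show ?thesis
    unfolding img sum.reindex[OF inj]
    by (simp add: sum.cartesian_product case_prod_unfold)
qed

lemma LL_1: "LL 1 A = (\<lambda>y. [y]) ` A"
  by (auto simp: LL_def length_Suc_conv)

lemma sum_LL_snoc:
  assumes "finite A"
  shows "(\<Sum>xs\<in>LL (Suc r) A. g xs) = (\<Sum>zs\<in>LL r A. \<Sum>y\<in>A. g (zs @ [y]))"
proof -
  have "(\<Sum>xs\<in>LL (r+1) A. g xs) = (\<Sum>zs\<in>LL r A. \<Sum>ws\<in>LL 1 A. g (zs @ ws))"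
    by (rule sum_LL_append[OF assms])
  also have "\<dots> = (\<Sum>zs\<in>LL r A. \<Sum>y\<in>A. g (zs @ [y]))"
    unfolding LL_1 by (subst sum.reindex) (auto simp: inj_on_def)
  finally show ?thesis by simp
qed

lemma sum_LL_prod:
  fixes p :: "nat \<Rightarrow> real"
  assumes "finite A"
  shows "(\<Sum>ws\<in>LL b A. prod_list (map p ws)) = (sum p A) ^ b"
proof (induction b)
  case 0 then show ?case by (simp add: LL_0)
next
  case (Suc b)
  have "(\<Sum>ws\<in>LL (Suc b) A. prod_list (map p ws)) = (\<Sum>zs\<in>LL b A. \<Sum>y\<in>A. prod_list (map p zs) * p y)"
    by (simp add: sum_LL_snoc[OF assms])
  also have "\<dots> = (\<Sum>zs\<in>LL b A. prod_list (map p zs)) * sum p A"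
    by (subst sum_distrib_right) (simp add: sum_distrib_left)
  finally show ?case using Suc by (simp add: mult.commute)
qed

lemma prod_nth_list: "length xs = n \<Longrightarrow> (\<Prod>i<n. p (xs ! i)) = prod_list (map p xs)"
proof (induction xs arbitrary: n)
  case Nil then show ?case by simp
next
  case (Cons x xs)
  then show ?case by (auto simp del: prod.lessThan_Suc simp add: prod.lessThan_Suc_shift)
qed

lemma RR_snoc: "RR a (zs @ [y]) = RR a zs * (1 - a (zs @ [y]))"
proof -
  have "RR a (zs @ [y]) = (\<Prod>s<Suc (length zs). 1 - a (take (Suc s) (zs @ [y])))"
    by (simp add: RR_def)
  also have "\<dots> = (\<Prod>s<length zs. 1 - a (take (Suc s) (zs @ [y]))) * (1 - a (zs @ [y]))"
    by (simp add: prod.lessThan_Suc)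
  also have "(\<Prod>s<length zs. 1 - a (take (Suc s) (zs @ [y]))) = RR a zs"
    unfolding RR_def by (rule prod.cong) auto
  finally show ?thesis .
qed

lemma stop_prob_split:
  assumes "length zs = t"
  shows "stop_prob a (zs @ [y] @ ws) t = RR a zs * a (zs @ [y])"
proof -
  have "(\<Prod>s<t. 1 - a (take (Suc s) (zs @ [y] @ ws))) = RR a zs"
    unfolding RR_def using assms by (intro prod.cong) auto
  then show ?thesis using assms by (simp add: stop_prob_def)
qed

lemma max_split:
  fixes y :: nat
  shows "(y = Max (set (zs @ [y] @ ws))) \<longleftrightarrow> (set zs \<subseteq> {..y} \<and> set ws \<subseteq> {..y})"
proof
  assume "y = Max (set (zs @ [y] @ ws))"
  then show "set zs \<subseteq> {..y} \<and> set ws \<subseteq> {..y}"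
    by (metis List.finite_set Max_ge Un_iff atMost_iff set_append subsetI)
next
  assume "set zs \<subseteq> {..y} \<and> set ws \<subseteq> {..y}"
  then show "y = Max (set (zs @ [y] @ ws))"
    by (intro Max_eqI[symmetric]) auto
qed

lemma LL_filter:
  assumes "y \<le> K"
  shows "{zs\<in>LL r {1..K}. set zs \<subseteq> {..y}} = LL r {1..y}"
  using assms by (auto simp: LL_def subset_iff)

lemma sum_LL_filter:
  assumes "y \<le> K"
  shows "(\<Sum>zs\<in>LL r {1..K}. if set zs \<subseteq> {..y} then f zs else 0) = (\<Sum>zs\<in>LL r {1..y}. f zs)"
proof -
  have "(\<Sum>zs\<in>LL r {1..K}. if set zs \<subseteq> {..y} then f zs else 0) = sum f {zs\<in>LL r {1..K}. set zs \<subseteq> {..y}}"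
    by (rule sum.inter_filter[symmetric]) (simp add: finite_LL)
  then show ?thesis using LL_filter[OF assms] by simp
qed


lemma success_term:
  fixes p :: "nat \<Rightarrow> real"
  assumes "t < n"
  shows "(\<Sum>xs\<in>LL n {1..K}. prod_list (map p xs) * (stop_prob a xs t * (if xs ! t = Max (set xs) then 1 else 0)))
       = (\<Sum>y\<in>{1..K}. WW p a t y * (\<Sum>l=1..y. p l) ^ (n - Suc t))"
proof -
  define b where "b = n - Suc t"
  define A where "A = {1..K::nat}"
  have nb: "n = Suc t + b" using assms by (simp add: b_def)
  define F where "F xs = prod_list (map p xs) * (stop_prob a xs t * (if xs ! t = Max (set xs) then 1 else 0))" for xs
  define G1 where "G1 zs y = (if set zs \<subseteq> {..y} then prod_list (map p zs) * p y * RR a zs * a (zs @ [y]) else 0)" for zs y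
  define G2 where "G2 ws y = (if set ws \<subseteq> {..y} then prod_list (map p ws) else (0::real))" for ws y
  have pw: "F (zs @ y # ws) = G1 zs y * G2 ws y" if "zs \<in> LL t A" for zs y ws
  proof -
    have lz: "length zs = t" using that by (simp add: LL_def)
    have "zs @ y # ws = zs @ [y] @ ws" by simp
    moreover have "(zs @ [y] @ ws) ! t = y" using lz by (simp add: nth_append)
    ultimately show ?thesis
      unfolding F_def G1_def G2_def using stop_prob_split[OF lz, of a y ws] max_split[of y zs ws]
      by auto
  qed
  have "(\<Sum>xs\<in>LL n A. F xs) = (\<Sum>zs\<in>LL t A. \<Sum>y\<in>A. \<Sum>ws\<in>LL b A. F ((zs @ [y]) @ ws))"
  proof -
    have fA: "finite A" by (simp add: A_def)
    have "(\<Sum>xs\<in>LL (Suc t + b) A. F xs) = (\<Sum>ys\<in>LL (Suc t) A. \<Sum>ws\<in>LL b A. F (ys @ ws))"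
      by (rule sum_LL_append[OF fA])
    also have "\<dots> = (\<Sum>zs\<in>LL t A. \<Sum>y\<in>A. \<Sum>ws\<in>LL b A. F ((zs @ [y]) @ ws))"
      by (rule sum_LL_snoc[OF fA])
    finally show ?thesis unfolding nb .
  qed
  also have "\<dots> = (\<Sum>zs\<in>LL t A. \<Sum>y\<in>A. G1 zs y * (\<Sum>ws\<in>LL b A. G2 ws y))"
    by (intro sum.cong refl) (simp add: pw sum_distrib_left)
  also have "\<dots> = (\<Sum>zs\<in>LL t A. \<Sum>y\<in>A. G1 zs y * (\<Sum>l=1..y. p l) ^ b)"
  proof (intro sum.cong refl)
    fix zs y assume "y \<in> A"
    then have "y \<le> K" by (simp add: A_def)
    have "(\<Sum>ws\<in>LL b A. G2 ws y) = (\<Sum>ws\<in>LL b {1..y}. prod_list (map p ws))"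
      unfolding G2_def A_def by (rule sum_LL_filter[OF \<open>y \<le> K\<close>])
    also have "\<dots> = (\<Sum>l=1..y. p l) ^ b" by (simp add: sum_LL_prod)
    finally show "G1 zs y * (\<Sum>ws\<in>LL b A. G2 ws y) = G1 zs y * (\<Sum>l=1..y. p l) ^ b" by simp
  qed
  also have "\<dots> = (\<Sum>y\<in>A. (\<Sum>zs\<in>LL t A. G1 zs y) * (\<Sum>l=1..y. p l) ^ b)"
    by (subst sum.swap) (simp add: sum_distrib_right)
  also have "\<dots> = (\<Sum>y\<in>A. WW p a t y * (\<Sum>l=1..y. p l) ^ b)"
  proof (intro sum.cong refl)
    fix y assume "y \<in> A"
    then have "y \<le> K" by (simp add: A_def)
    have "(\<Sum>zs\<in>LL t A. G1 zs y) = WW p a t y"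
      unfolding G1_def A_def WW_def by (rule sum_LL_filter[OF \<open>y \<le> K\<close>])
    then show "(\<Sum>zs\<in>LL t A. G1 zs y) * (\<Sum>l=1..y. p l) ^ b = WW p a t y * (\<Sum>l=1..y. p l) ^ b" by simp
  qed
  finally show ?thesis unfolding F_def A_def b_def .
qed

lemma success_decomp:
  fixes p :: "nat \<Rightarrow> real"
  shows "success_prob n K p a = (\<Sum>t<n. \<Sum>y\<in>{1..K}. WW p a t y * (\<Sum>l=1..y. p l) ^ (n - Suc t))"
proof -
  have set: "{xs. length xs = n \<and> set xs \<subseteq> {1..K}} = LL n {1..K}" by (simp add: LL_def)
  have "success_prob n K p a = (\<Sum>xs\<in>LL n {1..K}. \<Sum>t<n. prod_list (map p xs) * (stop_prob a xs t * (if xs ! t = Max (set xs) then 1 else 0)))"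
    unfolding success_prob_def set
    by (intro sum.cong refl) (simp add: prod_nth_list LL_def sum_distrib_left)
  also have "\<dots> = (\<Sum>t<n. \<Sum>xs\<in>LL n {1..K}. prod_list (map p xs) * (stop_prob a xs t * (if xs ! t = Max (set xs) then 1 else 0)))"
    by (rule sum.swap)
  also have "\<dots> = (\<Sum>t<n. \<Sum>y\<in>{1..K}. WW p a t y * (\<Sum>l=1..y. p l) ^ (n - Suc t))"
    by (intro sum.cong refl success_term) simp
  finally show ?thesis .
qed


fun Uh :: "(nat \<Rightarrow> real) \<Rightarrow> (nat list \<Rightarrow> real) \<Rightarrow> nat \<Rightarrow> nat \<Rightarrow> real" where
  "Uh f a 0 m = 1"
| "Uh f a (Suc t) m = cdf f m * Uh f a t m - (\<Sum>y\<in>{1..m}. WW f a t y)"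

definition cc :: "(nat \<Rightarrow> real) \<Rightarrow> (nat list \<Rightarrow> real) \<Rightarrow> nat \<Rightarrow> nat \<Rightarrow> real" where
  "cc f a t y = (if 0 < f y * Uh f a t y then WW f a t y / (f y * Uh f a t y) else 0)"

definition newacc :: "(nat \<Rightarrow> real) \<Rightarrow> (nat list \<Rightarrow> real) \<Rightarrow> nat list \<Rightarrow> real" where
  "newacc f a xs = (if xs \<noteq> [] \<and> last xs = Max (set xs) then cc f a (length xs - 1) (last xs) else 0)"

definition DD :: "(nat \<Rightarrow> real) \<Rightarrow> (nat list \<Rightarrow> real) \<Rightarrow> nat \<Rightarrow> nat \<Rightarrow> real" where
  "DD p a t m = (\<Sum>zs\<in>LL t {1..m}. \<Sum>y\<in>{1..m}. prod_list (map p zs) * p y * RR a zs * a (zs @ [y]))"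

lemma UU_0: "UU p a 0 m = 1"
  by (simp add: UU_def LL_0 RR_def)

lemma UU_Suc: "UU p a (Suc t) m = cdf p m * UU p a t m - DD p a t m"
proof -
  have "UU p a (Suc t) m = (\<Sum>zs\<in>LL t {1..m}. \<Sum>y\<in>{1..m}.
           prod_list (map p zs) * p y * RR a zs - prod_list (map p zs) * p y * RR a zs * a (zs @ [y]))"
    unfolding UU_def by (simp add: sum_LL_snoc RR_snoc algebra_simps)
  also have "\<dots> = (\<Sum>zs\<in>LL t {1..m}. \<Sum>y\<in>{1..m}. prod_list (map p zs) * p y * RR a zs) - DD p a t m"
    unfolding DD_def by (simp add: sum_subtractf)
  also have "(\<Sum>zs\<in>LL t {1..m}. \<Sum>y\<in>{1..m}. prod_list (map p zs) * p y * RR a zs) = cdf p m * UU p a t m"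
    unfolding UU_def cdf_def by (simp add: sum_distrib_left sum_distrib_right algebra_simps)
  finally show ?thesis .
qed

lemma newacc_snoc: "newacc f a (zs @ [y]) = (if set zs \<subseteq> {..y} then cc f a (length zs) y else 0)"
  using max_split[of y zs "[]"] by (auto simp: newacc_def)

lemma DD_new: "DD f (newacc f a) t m = (\<Sum>y\<in>{1..m}. WW f (newacc f a) t y)"
proof -
  have "DD f (newacc f a) t m = (\<Sum>y\<in>{1..m}. \<Sum>zs\<in>LL t {1..m}.
          if set zs \<subseteq> {..y} then prod_list (map f zs) * f y * RR (newacc f a) zs * cc f a t y else 0)"
    unfolding DD_def by (subst sum.swap) (intro sum.cong refl, auto simp: newacc_snoc LL_def)
  also have "\<dots> = (\<Sum>y\<in>{1..m}. WW f (newacc f a) t y)"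
  proof (intro sum.cong refl)
    fix y assume "y \<in> {1..m}"
    then have "y \<le> m" by simp
    show "(\<Sum>zs\<in>LL t {1..m}. if set zs \<subseteq> {..y} then prod_list (map f zs) * f y * RR (newacc f a) zs * cc f a t y else 0)
          = WW f (newacc f a) t y"
      unfolding sum_LL_filter[OF \<open>y \<le> m\<close>] WW_def
      by (intro sum.cong refl) (auto simp: newacc_snoc LL_def)
  qed
  finally show ?thesis .
qed

lemma WW_new: "WW f (newacc f a) t y = cc f a t y * f y * UU f (newacc f a) t y"
  unfolding WW_def UU_def sum_distrib_left
  by (intro sum.cong refl) (auto simp: newacc_snoc LL_def)

context
  fixes n K :: nat and f :: "nat \<Rightarrow> real" and a :: "nat list \<Rightarrow> real"
  assumes va: "valid_alg n K a" and fnn: "\<And>l. 0 \<le> f l"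
begin

lemma a_bounds:
  assumes "set xs \<subseteq> {1..K}" "xs \<noteq> []" "length xs \<le> n"
  shows "0 \<le> a xs" "a xs \<le> 1"
  using va assms by (auto simp: valid_alg_def prefixes_def)

lemma RR_nonneg:
  assumes "set zs \<subseteq> {1..K}" "length zs \<le> n"
  shows "0 \<le> RR a zs"
  unfolding RR_def
proof (intro prod_nonneg)
  fix s assume "s \<in> {..<length zs}"
  then have "set (take (Suc s) zs) \<subseteq> {1..K}" "take (Suc s) zs \<noteq> []" "length (take (Suc s) zs) \<le> n"
    using assms set_take_subset[of "Suc s" zs] by auto
  then show "0 \<le> 1 - a (take (Suc s) zs)" using a_bounds by simp
qed

lemma prod_nn: "0 \<le> prod_list (map f zs)"
  by (rule prod_list_nonneg) (auto simp: fnn)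

lemma UU_nonneg:
  assumes "m \<le> K" "t \<le> n"
  shows "0 \<le> UU f a t m"
  unfolding UU_def
proof (intro sum_nonneg)
  fix zs assume "zs \<in> LL t {1..m}"
  then have "set zs \<subseteq> {1..K}" "length zs \<le> n" using assms by (auto simp: LL_def)
  then show "0 \<le> prod_list (map f zs) * RR a zs" using RR_nonneg prod_nn by simp
qed

lemma term_nonneg:
  assumes "zs \<in> LL t {1..m}" "m \<le> K" "t < n" "y \<in> {1..K}"
  shows "0 \<le> prod_list (map f zs) * f y * RR a zs * a (zs @ [y])"
proof -
  have s: "set zs \<subseteq> {1..K}" "length zs = t" using assms by (auto simp: LL_def)
  then have "0 \<le> RR a zs" using RR_nonneg assms by simp
  moreover have "0 \<le> a (zs @ [y])" using a_bounds(1)[of "zs @ [y]"] s assms by auto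
  ultimately show ?thesis using prod_nn fnn by simp
qed

lemma WW_bounds:
  assumes "y \<in> {1..K}" "t < n"
  shows "0 \<le> WW f a t y" "WW f a t y \<le> f y * UU f a t y"
proof -
  show "0 \<le> WW f a t y" unfolding WW_def
    using term_nonneg assms by (intro sum_nonneg) auto
  show "WW f a t y \<le> f y * UU f a t y"
    unfolding WW_def UU_def sum_distrib_left
  proof (intro sum_mono)
    fix zs assume zs: "zs \<in> LL t {1..y}"
    have s: "set zs \<subseteq> {1..K}" "length zs = t" using assms zs by (auto simp: LL_def)
    have "a (zs @ [y]) \<le> 1" using a_bounds(2)[of "zs @ [y]"] s assms by auto
    moreover have "0 \<le> prod_list (map f zs) * f y * RR a zs"
      using RR_nonneg[of zs] s assms prod_nn fnn by simp
    ultimately have "prod_list (map f zs) * f y * RR a zs * a (zs @ [y]) \<le> prod_list (map f zs) * f y * RR a zs"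
      by (rule mult_left_le)
    then show "prod_list (map f zs) * f y * RR a zs * a (zs @ [y]) \<le> f y * (prod_list (map f zs) * RR a zs)"
      by (simp add: algebra_simps)
  qed
qed

lemma DD_ge:
  assumes "m \<le> K" "t < n"
  shows "(\<Sum>y\<in>{1..m}. WW f a t y) \<le> DD f a t m"
  unfolding DD_def
  apply (subst sum.swap)
  unfolding WW_def
proof (intro sum_mono sum_mono2)
  fix y assume y: "y \<in> {1..m}"
  show "finite (LL t {1..m})" by (simp add: finite_LL)
  show "LL t {1..y} \<subseteq> LL t {1..m}" using y by (auto simp: LL_def)
  fix zs assume "zs \<in> LL t {1..m} - LL t {1..y}"
  then show "0 \<le> prod_list (map f zs) * f y * RR a zs * a (zs @ [y])"
    using term_nonneg assms y by auto
qed

lemma UU_le_Uh: "t \<le> n \<Longrightarrow> m \<le> K \<Longrightarrow> UU f a t m \<le> Uh f a t m"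
proof (induction t arbitrary: m)
  case 0 then show ?case by (simp add: UU_0)
next
  case (Suc t)
  have c: "0 \<le> cdf f m" unfolding cdf_def by (simp add: sum_nonneg fnn)
  have "UU f a (Suc t) m = cdf f m * UU f a t m - DD f a t m" by (rule UU_Suc)
  also have "\<dots> \<le> cdf f m * Uh f a t m - (\<Sum>y\<in>{1..m}. WW f a t y)"
    using Suc.IH[of m] Suc.prems DD_ge[of m t] c
    by (smt (verit) Suc_le_lessD less_imp_le_nat mult_left_mono)
  finally show ?case by simp
qed

lemma cc_bounds:
  assumes "y \<in> {1..K}" "t < n"
  shows "0 \<le> cc f a t y" "cc f a t y \<le> 1"
proof -
  have w: "0 \<le> WW f a t y" "WW f a t y \<le> f y * UU f a t y" using WW_bounds assms by auto
  have "f y * UU f a t y \<le> f y * Uh f a t y"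
    using UU_le_Uh[of t y] assms fnn by (simp add: mult_left_mono)
  with w show "0 \<le> cc f a t y" "cc f a t y \<le> 1" unfolding cc_def by auto
qed

lemma WW_eq_step:
  assumes "y \<in> {1..K}" "t < n" "UU f (newacc f a) t y = Uh f a t y"
  shows "WW f (newacc f a) t y = WW f a t y"
proof -
  have w: "0 \<le> WW f a t y" "WW f a t y \<le> f y * UU f a t y" using WW_bounds assms by auto
  have "f y * UU f a t y \<le> f y * Uh f a t y"
    using UU_le_Uh[of t y] assms fnn by (simp add: mult_left_mono)
  with w show ?thesis unfolding WW_new assms(3) cc_def by auto
qed

lemma UU_new_eq: "t \<le> n \<Longrightarrow> m \<le> K \<Longrightarrow> UU f (newacc f a) t m = Uh f a t m"
proof (induction t arbitrary: m)
  case 0 then show ?case by (simp add: UU_0)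
next
  case (Suc t)
  have "UU f (newacc f a) (Suc t) m = cdf f m * UU f (newacc f a) t m - (\<Sum>y\<in>{1..m}. WW f (newacc f a) t y)"
    by (simp add: UU_Suc DD_new)
  also have "(\<Sum>y\<in>{1..m}. WW f (newacc f a) t y) = (\<Sum>y\<in>{1..m}. WW f a t y)"
    using Suc by (intro sum.cong refl WW_eq_step) auto
  finally show ?case using Suc by simp
qed

lemma WW_new_eq:
  assumes "y \<in> {1..K}" "t < n"
  shows "WW f (newacc f a) t y = WW f a t y"
  using assms UU_new_eq[of t y] by (intro WW_eq_step) auto

lemma newacc_valid: "valid_alg n K (newacc f a)"
  unfolding valid_alg_def
proof
  fix xs assume "xs \<in> prefixes n K"
  then have xs: "xs \<noteq> []" "length xs \<le> n" "set xs \<subseteq> {1..K}" by (auto simp: prefixes_def)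
  have "last xs \<in> {1..K}" using last_in_set[OF xs(1)] xs(3) by blast
  moreover have "length xs - 1 < n" using xs(1,2) by (cases xs) auto
  ultimately show "0 \<le> newacc f a xs \<and> newacc f a xs \<le> 1"
    using cc_bounds unfolding newacc_def by auto
qed

end

lemma newacc_mo: "minor_oblivious n K (newacc f a)"
  unfolding minor_oblivious_def newacc_def by auto


lemma trunc_prod: "set zs \<subseteq> {1..k} \<Longrightarrow>
  prod_list (map (trunc_pmf f k) zs) = prod_list (map f zs) / cdf f k ^ length zs"
  by (induction zs) (auto simp: trunc_pmf_def)

lemma WW_trunc:
  assumes "1 \<le> y"
  shows "WW (trunc_pmf f k) a t y = (if y \<le> k then WW f a t y / cdf f k ^ Suc t else 0)"
proof (cases "y \<le> k")
  case True
  have "WW (trunc_pmf f k) a t y = (\<Sum>zs\<in>LL t {1..y}. (prod_list (map f zs) * f y * RR a zs * a (zs @ [y])) / cdf f k ^ Suc t)"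
    unfolding WW_def
  proof (intro sum.cong refl)
    fix zs assume "zs \<in> LL t {1..y}"
    then have "set zs \<subseteq> {1..k}" "length zs = t" using True by (auto simp: LL_def)
    then show "prod_list (map (trunc_pmf f k) zs) * trunc_pmf f k y * RR a zs * a (zs @ [y]) =
       prod_list (map f zs) * f y * RR a zs * a (zs @ [y]) / cdf f k ^ Suc t"
      using trunc_prod[of zs k f] True assms by (simp add: trunc_pmf_def)
  qed
  also have "\<dots> = WW f a t y / cdf f k ^ Suc t"
    unfolding WW_def by (simp add: sum_divide_distrib)
  finally show ?thesis using True by simp
next
  case False
  then show ?thesis unfolding WW_def by (simp add: trunc_pmf_def)
qed

theorem mainTheorem19:
  fixes n K :: nat and ft :: "nat \<Rightarrow> real" and \<alpha> \<beta> :: real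
    and acc :: "nat list \<Rightarrow> real"
  assumes "1 \<le> n" and "1 \<le> K"
    and "is_pmf_on K ft" and "ft 1 > 0"
    and "valid_alg n K acc"
    and "success_prob n K (trunc_pmf ft K) acc \<ge> \<alpha>"
    and "\<forall>k\<in>{1..K-1}. success_prob n K (trunc_pmf ft k) acc \<ge> \<beta>"
  shows "\<exists>acc'. valid_alg n K acc' \<and> minor_oblivious n K acc'
           \<and> success_prob n K (trunc_pmf ft K) acc' \<ge> \<alpha>
           \<and> (\<forall>k\<in>{1..K-1}. success_prob n K (trunc_pmf ft k) acc' \<ge> \<beta>)"
proof -
  have fnn: "\<And>l. 0 \<le> ft l" using assms(3) by (simp add: is_pmf_on_def)
  note va = assms(5)
  have eq: "success_prob n K (trunc_pmf ft k) (newacc ft acc) = success_prob n K (trunc_pmf ft k) acc" for k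
    unfolding success_decomp
  proof (intro sum.cong refl)
    fix t y assume t: "t \<in> {..<n}" and y: "y \<in> {1..K}"
    have "WW ft (newacc ft acc) t y = WW ft acc t y"
      using WW_new_eq[OF va fnn y] t by simp
    then show "WW (trunc_pmf ft k) (newacc ft acc) t y * (\<Sum>l = 1..y. trunc_pmf ft k l) ^ (n - Suc t) =
         WW (trunc_pmf ft k) acc t y * (\<Sum>l = 1..y. trunc_pmf ft k l) ^ (n - Suc t)"
      using y by (simp add: WW_trunc)
  qed
  show ?thesis
    apply (rule exI[of _ "newacc ft acc"])
    using newacc_valid[OF va fnn] newacc_mo[of n K ft acc] eq assms(6,7) by simp
qed

end
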